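(* If a system $C=(1,c_2,c_3,c_4,c_5,c_6)$ is canonical and its subsystem $(1,c_2,c_3,c_4,c_5)$ is noncanonical, then $c_6\ne 2c_5-c_4$.
   Context: A system is a tuple $C=(c_1,\dots,c_n)$ of integers with $1=c_1<c_2<\dots<c_n$; for $k\le n$, $(c_1,\dots,c_k)$ is a subsystem. For a positive integer $v$, $\mathrm{opt}_C(v)$ is the minimum of $\sum_i x_i$ over $x\in\mathbb{Z}_{\ge0}^n$ with $\sum_i c_ix_i=v$. The greedy representation of $v$ is produced by: for $i=n$ down to $1$, while $c_i\le$ remaining value, take a coin $c_i$. $\mathrm{grd}_C(v)$ is its number of coins. A positive integer $w$ is a counterexample if $\mathrm{opt}_C(w)<\mathrm{grd}_C(w)$; $C$ is canonical if it has none, noncanonical otherwise. *)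

theory Defs
  imports Main
begin

definition is_system :: "nat list \<Rightarrow> bool" where
  "is_system C \<longleftrightarrow> C \<noteq> [] \<and> hd C = 1 \<and> sorted_wrt (<) C"

definition representations :: "nat list \<Rightarrow> nat \<Rightarrow> nat list set" where
  "representations C v = {x. length x = length C \<and> (\<Sum>i<length C. C ! i * x ! i) = v}"

definition opt :: "nat list \<Rightarrow> nat \<Rightarrow> nat" where
  "opt C v = (LEAST k. \<exists>x \<in> representations C v. sum_list x = k)"

fun grd_desc :: "nat list \<Rightarrow> nat \<Rightarrow> nat" where
  "grd_desc [] v = 0"
| "grd_desc (c # cs) v = (if c = 0 then grd_desc cs v else v div c + grd_desc cs (v mod c))"

definition grd :: "nat list \<Rightarrow> nat \<Rightarrow> nat" where
  "grd C v = grd_desc (rev C) v"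

definition counterexample :: "nat list \<Rightarrow> nat \<Rightarrow> bool" where
  "counterexample C w \<longleftrightarrow> w > 0 \<and> opt C w < grd C w"

definition canonical :: "nat list \<Rightarrow> bool" where
  "canonical C \<longleftrightarrow> (\<forall>w. \<not> counterexample C w)"

end

theory Submission imports Defs begin

lemma len5: "length (x::nat list) = 5 \<Longrightarrow> \<exists>x1 x2 x3 x4 x5. x = [x1,x2,x3,x4,x5]"
  by (auto simp: eval_nat_numeral length_Suc_conv)

lemma gd_step: "0 < c \<Longrightarrow> c \<le> u \<Longrightarrow> grd_desc (c # cs) u = 1 + grd_desc (c # cs) (u - c)"
  by (simp add: le_div_geq le_mod_geq)

lemma gd_skip: "u < c \<Longrightarrow> grd_desc (c # cs) u = grd_desc cs u"
  by simp

lemma gd_one: "grd_desc [1] u = u" by simp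

locale sys5 =
  fixes c2 c3 c4 c5 :: nat
  assumes o2: "1 < c2" and o3: "c2 < c3" and o4: "c3 < c4" and o5: "c4 < c5"
begin

definition coins :: "nat set" where "coins = {1,c2,c3,c4,c5}"

definition g :: "nat \<Rightarrow> nat" where "g u = grd_desc [c5,c4,c3,c2,1] u"

definition R5 :: "nat \<Rightarrow> nat \<Rightarrow> bool" where
  "R5 v k \<longleftrightarrow> (\<exists>x1 x2 x3 x4 x5. x1 + c2*x2 + c3*x3 + c4*x4 + c5*x5 = v \<and> x1+x2+x3+x4+x5 = k)"

definition Op :: "nat \<Rightarrow> nat" where "Op v = (LEAST k. R5 v k)"

lemma grd_eq: "grd [1,c2,c3,c4,c5] u = g u" by (simp add: grd_def g_def)

lemma gA: "u < c2 \<Longrightarrow> g u = u"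
  using o2 o3 o4 o5 by (simp add: g_def)
lemma gB: "c2 \<le> u \<Longrightarrow> u < c3 \<Longrightarrow> g u = 1 + g (u - c2)"
proof -
  assume a: "c2 \<le> u" "u < c3"
  have "g u = grd_desc [c2,1] u" using a o4 o5 by (simp add: g_def)
  also have "\<dots> = 1 + grd_desc [c2,1] (u - c2)" using a o2 by (intro gd_step) auto
  also have "grd_desc [c2,1] (u - c2) = g (u - c2)" using a o3 o4 o5 by (simp add: g_def)
  finally show ?thesis .
qed
lemma gC: "c3 \<le> u \<Longrightarrow> u < c4 \<Longrightarrow> g u = 1 + g (u - c3)"
proof -
  assume a: "c3 \<le> u" "u < c4"
  have "g u = grd_desc [c3,c2,1] u" using a o4 o5 by (simp add: g_def)
  also have "\<dots> = 1 + grd_desc [c3,c2,1] (u - c3)" using a o2 o3 by (intro gd_step) auto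
  also have "grd_desc [c3,c2,1] (u - c3) = g (u - c3)" using a o3 o4 o5 by (simp add: g_def)
  finally show ?thesis .
qed
lemma gD: "c4 \<le> u \<Longrightarrow> u < c5 \<Longrightarrow> g u = 1 + g (u - c4)"
proof -
  assume a: "c4 \<le> u" "u < c5"
  have "g u = grd_desc [c4,c3,c2,1] u" using a o4 o5 by (simp add: g_def)
  also have "\<dots> = 1 + grd_desc [c4,c3,c2,1] (u - c4)" using a o2 o3 o4 by (intro gd_step) auto
  also have "grd_desc [c4,c3,c2,1] (u - c4) = g (u - c4)" using a o3 o4 o5 by (simp add: g_def)
  finally show ?thesis .
qed
lemma gE: "c5 \<le> u \<Longrightarrow> g u = 1 + g (u - c5)"
  unfolding g_def using o2 o3 o4 o5 by (intro gd_step) auto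

lemma g_le1: "g u \<le> 1 \<Longrightarrow> u = 0 \<or> u \<in> coins"
proof -
  assume h: "g u \<le> 1"
  have z: "g v = 0 \<longleftrightarrow> v = 0" for v
  proof (induction v rule: less_induct)
    case (less v)
    show ?case
    proof (cases "v < c2")
      case True then show ?thesis by (simp add: gA)
    next
      case False
      then have "g v > 0" using gB gC gD gE by (metis not_le zero_less_Suc plus_1_eq_Suc)
      then show ?thesis using False o2 by auto
    qed
  qed
  show ?thesis
  proof (cases "u < c2")
    case True then show ?thesis using h gA by (auto simp: coins_def)
  next
    case False
    show ?thesis
    proof (cases "u < c3")
      case True then have "g (u - c2) = 0" using h gB False by simp
      then show ?thesis using z False by (auto simp: coins_def)
    next
      case F3: False
      show ?thesis
      proof (cases "u < c4")
        case True then have "g (u - c3) = 0" using h gC F3 by simp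
        then show ?thesis using z F3 by (auto simp: coins_def)
      next
        case F4: False
        show ?thesis
        proof (cases "u < c5")
          case True then have "g (u - c4) = 0" using h gD F4 by simp
          then show ?thesis using z F4 by (auto simp: coins_def)
        next
          case F5: False
          then have "g (u - c5) = 0" using h gE by simp
          then show ?thesis using z F5 by (auto simp: coins_def)
        qed
      qed
    qed
  qed
qed

lemma R5_intro: "x1 + c2*x2 + c3*x3 + c4*x4 + c5*x5 = v \<Longrightarrow> x1+x2+x3+x4+x5 = k \<Longrightarrow> R5 v k"
  unfolding R5_def by blast

lemma R5_add_coin: "R5 v k \<Longrightarrow> a \<in> coins \<Longrightarrow> R5 (v + a) (k + 1)"
proof -
  assume "R5 v k" and ac: "a \<in> coins"
  then obtain x1 x2 x3 x4 x5 where x: "x1 + c2*x2 + c3*x3 + c4*x4 + c5*x5 = v" "x1+x2+x3+x4+x5 = k"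
    unfolding R5_def by blast
  have "a = 1 \<or> a = c2 \<or> a = c3 \<or> a = c4 \<or> a = c5" using ac by (auto simp: coins_def)
  then show ?thesis
  proof (elim disjE)
    assume "a = 1" then show ?thesis using x by (intro R5_intro[of "x1+1" x2 x3 x4 x5]) auto
  next
    assume "a = c2" then show ?thesis using x by (intro R5_intro[of "x1" "x2+1" x3 x4 x5]) (auto simp: algebra_simps)
  next
    assume "a = c3" then show ?thesis using x by (intro R5_intro[of "x1" "x2" "x3+1" x4 x5]) (auto simp: algebra_simps)
  next
    assume "a = c4" then show ?thesis using x by (intro R5_intro[of "x1" "x2" x3 "x4+1" x5]) (auto simp: algebra_simps)
  next
    assume "a = c5" then show ?thesis using x by (intro R5_intro[of "x1" "x2" x3 x4 "x5+1"]) (auto simp: algebra_simps)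
  qed
qed

lemma R5_0: "R5 0 0" unfolding R5_def by auto

lemma R5_g: "R5 u (g u)"
proof (induction u rule: less_induct)
  case (less u)
  show ?case
  proof (cases "u = 0")
    case True then show ?thesis using R5_0 gA o2 by simp
  next
    case u0: False
    have cc: "1 \<in> coins" "c2 \<in> coins" "c3 \<in> coins" "c4 \<in> coins" "c5 \<in> coins" by (auto simp: coins_def)
    show ?thesis
    proof (cases "u < c2")
      case True
      have "R5 (u - 1) (g (u - 1))" using less u0 by simp
      then have "R5 (u - 1 + 1) (g (u - 1) + 1)" by (rule R5_add_coin) (use cc in auto)
      then show ?thesis using True u0 gA by simp
    next
      case F2: False
      show ?thesis
      proof (cases "u < c3")
        case True
        have "R5 (u - c2) (g (u - c2))" using less o2 F2 by simp
        then have "R5 (u - c2 + c2) (g (u - c2) + 1)" by (rule R5_add_coin) (use cc in auto)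
        then show ?thesis using True F2 gB by simp
      next
        case F3: False
        show ?thesis
        proof (cases "u < c4")
          case True
          have "R5 (u - c3) (g (u - c3))" using less o2 o3 F3 by simp
          then have "R5 (u - c3 + c3) (g (u - c3) + 1)" by (rule R5_add_coin) (use cc in auto)
          then show ?thesis using True F3 gC by simp
        next
          case F4: False
          show ?thesis
          proof (cases "u < c5")
            case True
            have "R5 (u - c4) (g (u - c4))" using less o2 o3 o4 F4 by simp
            then have "R5 (u - c4 + c4) (g (u - c4) + 1)" by (rule R5_add_coin) (use cc in auto)
            then show ?thesis using True F4 gD by simp
          next
            case F5: False
            have "R5 (u - c5) (g (u - c5))" using less o2 o3 o4 o5 F5 by simp
            then have "R5 (u - c5 + c5) (g (u - c5) + 1)" by (rule R5_add_coin) (use cc in auto)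
            then show ?thesis using F5 gE by simp
          qed
        qed
      qed
    qed
  qed
qed

lemma Op_le: "R5 v k \<Longrightarrow> Op v \<le> k"
  unfolding Op_def by (rule Least_le)

lemma Op_R5: "R5 v (Op v)"
  unfolding Op_def using R5_g by (rule LeastI)

lemma Op_le_g: "Op v \<le> g v" using R5_g Op_le by blast

lemma R5_plus: "R5 a k \<Longrightarrow> R5 b l \<Longrightarrow> R5 (a+b) (k+l)"
proof -
  assume "R5 a k" "R5 b l"
  then obtain x1 x2 x3 x4 x5 y1 y2 y3 y4 y5 where
    x: "x1 + c2*x2 + c3*x3 + c4*x4 + c5*x5 = a" "x1+x2+x3+x4+x5 = k" and
    y: "y1 + c2*y2 + c3*y3 + c4*y4 + c5*y5 = b" "y1+y2+y3+y4+y5 = l"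
    unfolding R5_def by blast
  show ?thesis unfolding R5_def using x y
    by (intro exI[of _ "x1+y1"] exI[of _ "x2+y2"] exI[of _ "x3+y3"] exI[of _ "x4+y4"] exI[of _ "x5+y5"]) (auto simp: algebra_simps)
qed

lemma Op_sub: "Op (a + b) \<le> Op a + Op b"
  using R5_plus[OF Op_R5 Op_R5] Op_le by blast

lemma Op_coin: "a \<in> coins \<Longrightarrow> Op a \<le> 1"
  using R5_add_coin[OF R5_0] Op_le by fastforce

lemma usable: "0 < v \<Longrightarrow> \<exists>a\<in>coins. a \<le> v \<and> Op (v - a) + 1 = Op v"
proof -
  assume v: "0 < v"
  obtain x1 x2 x3 x4 x5 where x: "x1 + c2*x2 + c3*x3 + c4*x4 + c5*x5 = v" "x1+x2+x3+x4+x5 = Op v"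
    using Op_R5 unfolding R5_def by blast
  have key: "\<exists>a\<in>coins. a \<le> v \<and> R5 (v - a) (Op v - 1) \<and> Op v \<ge> 1"
  proof -
    have "x1 > 0 \<or> x2 > 0 \<or> x3 > 0 \<or> x4 > 0 \<or> x5 > 0" using x v by (cases "x1 + x2 + x3 + x4 + x5 = 0") auto
    then show ?thesis
    proof (elim disjE)
      assume h: "x1 > 0"
      then obtain y where y: "x1 = Suc y" using gr0_conv_Suc by blast
      have "R5 (v - 1) (Op v - 1)" using x y by (intro R5_intro[of y x2 x3 x4 x5]) (auto simp: algebra_simps)
      moreover have "1 \<le> v" using x y by auto
      ultimately show ?thesis using x h by (intro bexI[of _ 1]) (auto simp: coins_def)
    next
      assume h: "x2 > 0"
      then obtain y where y: "x2 = Suc y" using gr0_conv_Suc by blast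
      have "R5 (v - c2) (Op v - 1)" using x y by (intro R5_intro[of x1 y x3 x4 x5]) (auto simp: algebra_simps)
      moreover have "c2 \<le> v" using x y by auto
      ultimately show ?thesis using x h by (intro bexI[of _ c2]) (auto simp: coins_def)
    next
      assume h: "x3 > 0"
      then obtain y where y: "x3 = Suc y" using gr0_conv_Suc by blast
      have "R5 (v - c3) (Op v - 1)" using x y by (intro R5_intro[of x1 x2 y x4 x5]) (auto simp: algebra_simps)
      moreover have "c3 \<le> v" using x y by auto
      ultimately show ?thesis using x h by (intro bexI[of _ c3]) (auto simp: coins_def)
    next
      assume h: "x4 > 0"
      then obtain y where y: "x4 = Suc y" using gr0_conv_Suc by blast
      have "R5 (v - c4) (Op v - 1)" using x y by (intro R5_intro[of x1 x2 x3 y x5]) (auto simp: algebra_simps)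
      moreover have "c4 \<le> v" using x y by auto
      ultimately show ?thesis using x h by (intro bexI[of _ c4]) (auto simp: coins_def)
    next
      assume h: "x5 > 0"
      then obtain y where y: "x5 = Suc y" using gr0_conv_Suc by blast
      have "R5 (v - c5) (Op v - 1)" using x y by (intro R5_intro[of x1 x2 x3 x4 y]) (auto simp: algebra_simps)
      moreover have "c5 \<le> v" using x y by auto
      ultimately show ?thesis using x h by (intro bexI[of _ c5]) (auto simp: coins_def)
    qed
  qed
  then obtain a where a: "a \<in> coins" "a \<le> v" "R5 (v - a) (Op v - 1)" "Op v \<ge> 1" by blast
  have "Op (v - a) \<le> Op v - 1" using a Op_le by blast
  moreover have "Op v \<le> Op (v - a) + Op a" using Op_sub[of "v - a" a] a by simp
  moreover have "Op a \<le> 1" using Op_coin a by blast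
  ultimately show ?thesis using a by (intro bexI[of _ a]) auto
qed


lemma opt_eq: "opt [1,c2,c3,c4,c5] v = Op v"
proof -
  have "(\<exists>x\<in>representations [1,c2,c3,c4,c5] v. sum_list x = k) \<longleftrightarrow> R5 v k" for k
  proof
    assume "\<exists>x\<in>representations [1,c2,c3,c4,c5] v. sum_list x = k"
    then obtain x where xr: "x \<in> representations [1,c2,c3,c4,c5] v" and xs: "sum_list x = k" by blast
    then have "length x = 5" by (simp add: representations_def)
    then obtain x1 x2 x3 x4 x5 where xe: "x = [x1,x2,x3,x4,x5]" using len5 by blast
    show "R5 v k" using xr xs unfolding xe by (intro R5_intro[of x1 x2 x3 x4 x5]) (auto simp: representations_def eval_nat_numeral algebra_simps)
  next
    assume "R5 v k"
    then obtain x1 x2 x3 x4 x5 where x: "x1 + c2*x2 + c3*x3 + c4*x4 + c5*x5 = v" "x1+x2+x3+x4+x5 = k"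
      unfolding R5_def by blast
    show "\<exists>x\<in>representations [1,c2,c3,c4,c5] v. sum_list x = k"
      using x by (intro bexI[of _ "[x1,x2,x3,x4,x5]"]) (auto simp: representations_def eval_nat_numeral algebra_simps)
  qed
  then show ?thesis unfolding opt_def Op_def by simp
qed

lemma optC_le: "R5 V k \<Longrightarrow> opt [1,c2,c3,c4,c5,c6] V \<le> k"
proof -
  assume "R5 V k"
  then obtain x1 x2 x3 x4 x5 where x: "x1 + c2*x2 + c3*x3 + c4*x4 + c5*x5 = V" "x1+x2+x3+x4+x5 = k"
    unfolding R5_def by blast
  have "[x1,x2,x3,x4,x5,0] \<in> representations [1,c2,c3,c4,c5,c6] V"
    using x by (auto simp: representations_def eval_nat_numeral algebra_simps)
  moreover have "sum_list [x1,x2,x3,x4,x5,0] = k" using x by simp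
  ultimately show ?thesis unfolding opt_def by (metis (mono_tags, lifting) Least_le)
qed

lemma grdC_lo: "V < c6 \<Longrightarrow> grd [1,c2,c3,c4,c5,c6] V = g V"
  by (simp add: grd_def g_def)

lemma grdC_hi: "c5 < c6 \<Longrightarrow> c6 \<le> V \<Longrightarrow> V < 2*c6 \<Longrightarrow> grd [1,c2,c3,c4,c5,c6] V = 1 + g (V - c6)"
proof -
  assume h: "c5 < c6" "c6 \<le> V" "V < 2*c6"
  have "grd [1,c2,c3,c4,c5,c6] V = grd_desc [c6,c5,c4,c3,c2,1] V" by (simp add: grd_def)
  also have "\<dots> = 1 + grd_desc [c6,c5,c4,c3,c2,1] (V - c6)" using h by (intro gd_step) auto
  also have "grd_desc [c6,c5,c4,c3,c2,1] (V - c6) = g (V - c6)" using h by (simp add: g_def)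
  finally show ?thesis .
qed

lemma main:
  assumes o6: "c5 < c6" and can: "canonical [1,c2,c3,c4,c5,c6]"
    and nc: "\<not> canonical [1,c2,c3,c4,c5]" and eq: "c6 + c4 = 2*c5"
  shows False
proof -
  have canV: "grd [1,c2,c3,c4,c5,c6] V \<le> opt [1,c2,c3,c4,c5,c6] V" if "0 < V" for V
    using can that unfolding canonical_def counterexample_def by (meson not_le)
  have "\<exists>w. 0 < w \<and> opt [1,c2,c3,c4,c5] w < grd [1,c2,c3,c4,c5] w" using nc
    unfolding canonical_def counterexample_def by blast
  then have "\<exists>w. 0 < w \<and> Op w < g w" by (simp only: opt_eq grd_eq)
  define w where "w = (LEAST w. 0 < w \<and> Op w < g w)"
  have wL: "0 < w \<and> Op w < g w" unfolding w_def by (rule LeastI_ex) fact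
  then have w: "0 < w" "Op w < g w" by auto
  have M: "Op u = g u" if "0 < u" "u < w" for u
    using not_less_Least[of u "\<lambda>w. 0 < w \<and> Op w < g w"] that Op_le_g[of u] unfolding w_def[symmetric]
    by (meson le_antisym not_le)
  define d where "d = c5 - c4"
  have c6d: "c6 = c5 + d" and c5d: "c5 = c4 + d" using eq o5 unfolding d_def by auto
  have d0: "0 < d" using o5 d_def by simp
  have cc: "1 \<in> coins" "c2 \<in> coins" "c3 \<in> coins" "c4 \<in> coins" "c5 \<in> coins" by (auto simp: coins_def)
  have s1: "c6 \<le> w"
  proof (rule ccontr)
    assume "\<not> c6 \<le> w"
    then have "grd [1,c2,c3,c4,c5,c6] w = g w" using grdC_lo by simp
    moreover have "opt [1,c2,c3,c4,c5,c6] w \<le> Op w" using optC_le[OF Op_R5] .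
    ultimately show False using canV[OF w(1)] w(2) by linarith
  qed
  have T: "b = d \<or> b - d \<in> coins" if b: "b \<in> coins" "d \<le> b" for b
  proof -
    have bc5: "b \<le> c5" using b o2 o3 o4 o5 by (auto simp: coins_def)
    have "R5 (0 + c5 + b) (0 + 1 + 1)" by (intro R5_add_coin R5_0 cc b)
    then have "opt [1,c2,c3,c4,c5,c6] (c5 + b) \<le> 2" using optC_le[of "0 + c5 + b" "0 + 1 + 1" c6] by simp
    moreover have "grd [1,c2,c3,c4,c5,c6] (c5 + b) = 1 + g (c5 + b - c6)"
      using b bc5 o6 c6d by (intro grdC_hi) auto
    moreover have "c5 + b - c6 = b - d" using c6d by simp
    ultimately have "g (b - d) \<le> 1" using canV[of "c5 + b"] o2 o3 o4 o5 by simp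
    then show ?thesis using g_le1 b by force
  qed
  obtain a where a: "a \<in> coins" "a \<le> w" "Op (w - a) + 1 = Op w" using usable[OF w(1)] by blast
  define k where "k = Op w"
  have gw: "g w = 1 + g (w - c5)" using gE s1 c6d by simp
  have a1: "1 \<le> a" using a(1) o2 o3 o4 o5 by (auto simp: coins_def)
  have s4: "a \<noteq> c5"
  proof
    assume "a = c5"
    then have "Op (w - c5) = g (w - c5)" using M s1 c6d d0 o5 o2 o3 o4 by simp
    then show False using a(3) \<open>a = c5\<close> gw w(2) by simp
  qed
  have s5: "w - a < c5"
  proof (rule ccontr)
    assume h: "\<not> w - a < c5"
    have "Op (w - a) = g (w - a)" using M h a1 o5 a(2) by (intro M) auto
    moreover have "g (w - a) = 1 + g (w - a - c5)" using h gE by simp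
    moreover have "Op (w - c5) \<le> Op (w - a - c5) + Op a" using Op_sub[of "w - a - c5" a] h a(2) by (simp add: add.commute)
    moreover have "Op (w - a - c5) \<le> g (w - a - c5)" by (rule Op_le_g)
    moreover have "Op a \<le> 1" using Op_coin a(1) .
    moreover have "Op (w - c5) = g (w - c5)" using s1 c6d d0 o5 o2 by (intro M) auto
    ultimately show False using gw w(2) a(3) by linarith
  qed
  have ac4: "a \<le> c4" using a(1) s4 o2 o3 o4 by (auto simp: coins_def)
  define v where "v = w - c5"
  have wv: "w = c5 + v" using v_def s1 c6d by simp
  have vd: "d \<le> v" using wv s1 c6d by simp
  have av: "v < a" using s5 wv by simp
  have dc4: "d < c4" using av vd ac4 by simp
  define e where "e = c4 - d"
  have ce: "c4 = d + e" using e_def dc4 by simp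
  have e_coin: "e \<in> coins" using T[OF cc(4)] dc4 e_def by auto
  have s9: "Op w \<le> Op v" "1 \<le> Op w"
  proof -
    have "Op v = g v" using vd d0 wv c5d by (intro M) auto
    then show "Op w \<le> Op v" using gw w(2) v_def by simp
    show "1 \<le> Op w" using a(3) by simp
  qed
  have wa0: "0 < w - a" "w - a < w" using wv ac4 c5d d0 a1 by auto
  have gwa: "g (w - a) = Op w - 1" using M[OF wa0] a(3) by simp
  have pat: False if "\<beta> \<in> coins" "\<beta> \<le> v" "g (w - a) = 1 + g (v - \<beta>)" for \<beta>
  proof -
    have "Op v \<le> Op \<beta> + Op (v - \<beta>)" using Op_sub[of \<beta> "v - \<beta>"] that(2) by simp
    moreover have "Op \<beta> \<le> 1" using Op_coin that(1) .
    moreover have "Op (v - \<beta>) \<le> g (v - \<beta>)" by (rule Op_le_g)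
    ultimately show False using that(3) gwa s9 by linarith
  qed
  define b where "b = a - d"
  have ab: "a = b + d" using b_def av vd by simp
  have b_coin: "b \<in> coins" using T[OF a(1)] av vd b_def by auto
  show False
  proof (cases "b \<le> v")
    case True
    have "w - a = c4 + (v - b)" using True wv ab c5d by simp
    moreover have "c4 + (v - b) < c5" using s5 calculation by simp
    ultimately have "g (w - a) = 1 + g (v - b)" using gD by simp
    then show False using pat b_coin True by blast
  next
    case bv: False
    define b' where "b' = b - d"
    have bb: "b = b' + d" using b'_def bv vd by simp
    have b'_coin: "b' \<in> coins" using T[OF b_coin] bv vd b'_def by auto
    show False
    proof (cases "b' \<le> v")
      case True
      have wae: "w - a = e + (v - b')" using True wv ab bb c5d ce by simp
      have lt: "v - b' < d" using bv bb True by simp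
      have bde: "b' + d \<le> e" using ac4 ab bb ce by simp
      have b'1: "1 \<le> b'" using b'_coin o2 o3 o4 o5 by (auto simp: coins_def)
      have "e < c4" using ce d0 by simp
      then have "e = 1 \<or> e = c2 \<or> e = c3" using e_coin o5 unfolding coins_def by auto
      then show False
      proof (elim disjE)
        assume "e = 1" then show False using bde b'1 d0 by simp
      next
        assume ec2: "e = c2"
        have "b = c2" using b_coin bb bde ec2 b'1 d0 o2 o3 o4 o5 by (auto simp: coins_def)
        have "b' = 1" using b'_coin bb bde ec2 d0 o2 o3 o4 o5 by (auto simp: coins_def)
        have c3c: "c3 - d \<in> coins" using T[OF cc(3)] \<open>b = c2\<close> bb o3 by auto
        have "1 < c3 - d" "c3 - d < c2" using \<open>b = c2\<close> \<open>b' = 1\<close> bb ce ec2 o3 o4 by auto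
        then show False using c3c o2 o3 o4 o5 by (auto simp: coins_def)
      next
        assume ec3: "e = c3"
        have "g (w - a) = 1 + g (v - b')" using gC wae ec3 lt ce by simp
        then show False using pat b'_coin True by blast
      qed
    next
      case b'v: False
      define b'' where "b'' = b' - d"
      have bb': "b' = b'' + d" using b''_def b'v vd by simp
      have b''_coin: "b'' \<in> coins" using T[OF b'_coin] b'v vd b''_def by auto
      have b''1: "1 \<le> b''" using b''_coin o2 o3 o4 o5 by (auto simp: coins_def)
      have ch: "b'' = 1 \<and> b' = c2 \<and> b = c3 \<and> a = c4"
        using b''_coin b'_coin b_coin a(1) bb' bb ab ac4 d0 o2 o3 o4 o5 by (auto simp: coins_def)
      have vd': "v = d" using ch bb' b'v vd by simp
      have "w - a = c2 + (v - b'')" using ch vd' wv c5d ab bb bb' d0 by auto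
      moreover have "c2 \<le> w - a" "w - a < c3" using calculation ch bb bb' vd' d0 by auto
      ultimately have "g (w - a) = 1 + g (v - b'')" using gB by simp
      then show False using pat[OF b''_coin] b''1 ch vd' d0 by simp
    qed
  qed
qed
end

theorem lemma6:
  fixes c2 c3 c4 c5 c6 :: nat
  assumes "is_system [1, c2, c3, c4, c5, c6]"
    and "canonical [1, c2, c3, c4, c5, c6]"
    and "\<not> canonical [1, c2, c3, c4, c5]"
  shows "int c6 \<noteq> 2 * int c5 - int c4"
proof
  assume h: "int c6 = 2 * int c5 - int c4"
  have o: "1 < c2" "c2 < c3" "c3 < c4" "c4 < c5" "c5 < c6"
    using assms(1) unfolding is_system_def by auto
  interpret sys5 c2 c3 c4 c5 using o by unfold_locales
  have "c6 + c4 = 2 * c5" using h by linarith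
  then show False using main[OF o(5) assms(2) assms(3)] by simp
qed

end
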